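(* For every environment $E$, every total preorder on $\Pi^E$ induced by a Regularised RL specification is also induced by some Function-from-Trajectory-Lotteries-to-Reals specification; i.e. $\mathrm{Ord}_{\mathrm{RRL}}(E)\subseteq\mathrm{Ord}_{\mathrm{FTLR}}(E)$. In particular, for every RRL specification and all $\pi_1,\pi_2\in\Pi^E$, $L_{\pi_1}=L_{\pi_2}$ implies $J_{\mathrm{RRL}}(\pi_1)=J_{\mathrm{RRL}}(\pi_2)$.
   Context: An environment is a tuple $E=(\mathcal S,\mathcal A,\mathcal T,\mathcal I)$ where $\mathcal S,\mathcal A$ are finite nonempty sets, $\mathcal T:\mathcal S\times\mathcal A\to\Delta(\mathcal S)$ and $\mathcal I\in\Delta(\mathcal S)$. A policy is a map $\pi:\mathcal S\to\Delta(\mathcal A)$ (stationary, possibly stochastic); $\Pi^E$ denotes the set of all policies. A trajectory $\xi=(s_0,a_0,s_1,a_1,\dots)$ is generated under $\pi$ by $s_0\sim\mathcal I$, $a_t\sim\pi(s_t)$, $s_{t+1}\sim\mathcal T(s_t,a_t)$; $\mathbb E^\pi_\xi$ denotes expectation under this distribution. An objective-specification formalism $X$ assigns to each environment $E$ a set of objective specifications, each inducing a total preorder $\succeq$ on $\Pi^E$; $\mathrm{Ord}_X(E)$ is the set of total preorders so induced. A specification defining a scalar $J:\Pi^E\to\mathbb R$ induces $\pi_1\succeq\pi_2\iff J(\pi_1)\ge J(\pi_2)$. Trajectory lottery: $L_{k,\pi}$ is the distribution of $(s_0,a_0,\dots,a_{k-1},s_k)$ under $\pi$, $L_\pi=(L_{0,\pi},L_{1,\pi},\dots)$,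 $L_{\Pi^E}=\{L_\pi:\pi\in\Pi^E\}$. RRL: specification $(\mathcal R,\alpha,F,\gamma)$ with $\mathcal R:\mathcal S\times\mathcal A\times\mathcal S\to\mathbb R$, $\alpha\in\mathbb R$, $F:\Delta(\mathcal A)\to\mathbb R$, $\gamma\in[0,1)$; $J_{\mathrm{RRL}}(\pi)=\mathbb E^\pi_\xi\big[\sum_{t=0}^\infty\gamma^t\big(\mathcal R(s_t,a_t,s_{t+1})-\alpha F(\pi(s_t))\big)\big]$. FTLR: specification $(f)$ with $f:L_{\Pi^E}\to\mathbb R$; $J(\pi)=f(L_\pi)$. *)

theory Defs
  imports "HOL-Probability.Probability"
begin

text \<open>Environment E = (S, A, T, I): S and A are the finite (nonempty) types 's and 'a,
  T :: 's => 'a => 's pmf, I :: 's pmf.\<close>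

type_synonym ('s, 'a) policy = "'s \<Rightarrow> 'a pmf"

text \<open>Finite trajectory (s_0, a_0, ..., a_{k-1}, s_k), represented as the list of
  pairs [(s_0,a_0), ..., (s_{k-1},a_{k-1})] together with the final state s_k.\<close>

type_synonym ('s, 'a) ftraj = "('s \<times> 'a) list \<times> 's"

fun traj_lottery_k ::
  "'s pmf \<Rightarrow> ('s \<Rightarrow> 'a \<Rightarrow> 's pmf) \<Rightarrow> ('s, 'a) policy \<Rightarrow> nat \<Rightarrow> ('s, 'a) ftraj pmf" where
  "traj_lottery_k I T \<pi> 0 = map_pmf (\<lambda>s. ([], s)) I"
| "traj_lottery_k I T \<pi> (Suc k) =
     bind_pmf (traj_lottery_k I T \<pi> k) (\<lambda>(h, s).
       bind_pmf (\<pi> s) (\<lambda>a. map_pmf (\<lambda>s'. (h @ [(s, a)], s')) (T s a)))"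

definition traj_lottery ::
  "'s pmf \<Rightarrow> ('s \<Rightarrow> 'a \<Rightarrow> 's pmf) \<Rightarrow> ('s, 'a) policy \<Rightarrow> nat \<Rightarrow> ('s, 'a) ftraj pmf" where
  "traj_lottery I T \<pi> = (\<lambda>k. traj_lottery_k I T \<pi> k)"

definition rrl_partial_return ::
  "('s \<Rightarrow> 'a \<Rightarrow> 's \<Rightarrow> real) \<Rightarrow> real \<Rightarrow> ('a pmf \<Rightarrow> real) \<Rightarrow> real \<Rightarrow> ('s, 'a) policy
     \<Rightarrow> ('s, 'a) ftraj \<Rightarrow> real" where
  "rrl_partial_return R \<alpha> F \<gamma> \<pi> \<xi> =
     (let h = fst \<xi>; sl = snd \<xi>;
          nxt = (\<lambda>t. if Suc t < length h then fst (h ! Suc t) else sl)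
      in (\<Sum>t<length h. \<gamma> ^ t *
            (R (fst (h ! t)) (snd (h ! t)) (nxt t) - \<alpha> * F (\<pi> (fst (h ! t))))))"

text \<open>J_RRL(pi): expectation of the infinite discounted regularised return, expressed as
  the limit of the expected n-step truncated returns (these converge since S, A are finite
  and gamma < 1).\<close>

definition J_RRL ::
  "'s pmf \<Rightarrow> ('s \<Rightarrow> 'a \<Rightarrow> 's pmf) \<Rightarrow> ('s \<Rightarrow> 'a \<Rightarrow> 's \<Rightarrow> real) \<Rightarrow> real \<Rightarrow> ('a pmf \<Rightarrow> real)
     \<Rightarrow> real \<Rightarrow> ('s, 'a) policy \<Rightarrow> real" where
  "J_RRL I T R \<alpha> F \<gamma> \<pi> =
     lim (\<lambda>n. measure_pmf.expectation (traj_lottery_k I T \<pi> n) (rrl_partial_return R \<alpha> F \<gamma> \<pi>))"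

definition induced_order :: "(('s, 'a) policy \<Rightarrow> real) \<Rightarrow> ('s, 'a) policy \<Rightarrow> ('s, 'a) policy \<Rightarrow> bool" where
  "induced_order J = (\<lambda>\<pi>1 \<pi>2. J \<pi>1 \<ge> J \<pi>2)"

definition Ord_RRL ::
  "'s pmf \<Rightarrow> ('s \<Rightarrow> 'a \<Rightarrow> 's pmf) \<Rightarrow> (('s, 'a) policy \<Rightarrow> ('s, 'a) policy \<Rightarrow> bool) set" where
  "Ord_RRL I T = {ord. \<exists>R \<alpha> F \<gamma>. 0 \<le> \<gamma> \<and> \<gamma> < 1 \<and> ord = induced_order (J_RRL I T R \<alpha> F \<gamma>)}"

text \<open>FTLR: f is a real function on trajectory lotteries (only its values on L_{Pi^E} matter).\<close>

definition Ord_FTLR ::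
  "'s pmf \<Rightarrow> ('s \<Rightarrow> 'a \<Rightarrow> 's pmf) \<Rightarrow> (('s, 'a) policy \<Rightarrow> ('s, 'a) policy \<Rightarrow> bool) set" where
  "Ord_FTLR I T = {ord. \<exists>f :: (nat \<Rightarrow> ('s, 'a) ftraj pmf) \<Rightarrow> real.
                      ord = induced_order (\<lambda>\<pi>. f (traj_lottery I T \<pi>))}"

end

theory Submission imports Defs begin

lemma setA:
  "(h, s') \<in> set_pmf (traj_lottery_k I T \<pi> k) \<Longrightarrow> length h = k \<and>
    (\<forall>t<length h. \<exists>x. (take t h, fst (h!t)) = x \<and> x \<in> set_pmf (traj_lottery_k I T \<pi> t))
    \<and> (\<forall>t<length h. snd (h!t) \<in> set_pmf (\<pi> (fst (h!t))))"
proof (induction k arbitrary: h s')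
  case 0 then show ?case by auto
next
  case (Suc k)
  from Suc.prems obtain h0 s0 a where h0: "(h0,s0) \<in> set_pmf (traj_lottery_k I T \<pi> k)"
    and a: "a \<in> set_pmf (\<pi> s0)" and h: "h = h0 @ [(s0,a)]"
    by (auto split: prod.splits)
  note IH = Suc.IH[OF h0]
  show ?case
  proof (intro conjI allI impI)
    show "length h = Suc k" using IH h by simp
  next
    fix t assume "t < length h"
    then have "t < length h0 \<or> t = length h0" using h by auto
    then show "\<exists>x. (take t h, fst (h!t)) = x \<and> x \<in> set_pmf (traj_lottery_k I T \<pi> t)"
    proof
      assume "t < length h0" then show ?thesis using IH h by (auto simp: nth_append)
    next
      assume "t = length h0" then show ?thesis using IH h h0 by (auto simp: nth_append)
    qed
  next
    fix t assume "t < length h"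
    then have "t < length h0 \<or> t = length h0" using h by auto
    then show "snd (h!t) \<in> set_pmf (\<pi> (fst (h!t)))"
      using IH h a by (auto simp: nth_append)
  qed
qed

lemma pmf_hist:
  "pmf (map_pmf fst (traj_lottery_k I T \<pi> (Suc k))) (h @ [(s,a)]) =
     pmf (traj_lottery_k I T \<pi> k) (h, s) * pmf (\<pi> s) a"
proof -
  have "map_pmf fst (traj_lottery_k I T \<pi> (Suc k)) =
     bind_pmf (traj_lottery_k I T \<pi> k) (\<lambda>(h0, s0). map_pmf (\<lambda>a0. h0 @ [(s0,a0)]) (\<pi> s0))"
    unfolding traj_lottery_k.simps map_bind_pmf
    by (rule bind_pmf_cong[OF refl]) (auto simp: map_bind_pmf map_pmf_comp map_pmf_const bind_return_pmf' split: prod.splits; simp add: map_pmf_def)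
  also have "pmf \<dots> (h @ [(s,a)]) =
     measure_pmf.expectation (traj_lottery_k I T \<pi> k)
       (\<lambda>x. indicator {(h,s)} x * pmf (\<pi> s) a)"
    unfolding pmf_bind
  proof (rule Bochner_Integration.integral_cong[OF refl])
    fix x :: "('a \<times> 'b) list \<times> 'a" obtain h0 s0 where x: "x = (h0,s0)" by force
    have "pmf (map_pmf (\<lambda>a0. h0 @ [(s0, a0)]) (\<pi> s0)) (h @ [(s, a)])
        = (if h0 = h \<and> s0 = s then pmf (\<pi> s) a else 0)"
    proof (cases "h0 = h \<and> s0 = s")
      case True
      then show ?thesis using pmf_map_inj'[of "\<lambda>a0. h @ [(s, a0)]" "\<pi> s" a] by (simp add: inj_def)
    next
      case False
      then have "h @ [(s, a)] \<notin> set_pmf (map_pmf (\<lambda>a0. h0 @ [(s0, a0)]) (\<pi> s0))" by auto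
      then have "pmf (map_pmf (\<lambda>a0. h0 @ [(s0, a0)]) (\<pi> s0)) (h @ [(s, a)]) = 0" by (simp add: pmf_eq_0_set_pmf)
      then show ?thesis using False by auto
    qed
    then show "pmf (case x of (h0, s0) \<Rightarrow> map_pmf (\<lambda>a0. h0 @ [(s0, a0)]) (\<pi> s0)) (h @ [(s,a)])
      = indicator {(h, s)} x * pmf (\<pi> s) a" using x by (auto simp: indicator_def)
  qed
  also have "\<dots> = pmf (traj_lottery_k I T \<pi> k) (h, s) * pmf (\<pi> s) a"
    by (simp add: measure_pmf_single)
  finally show ?thesis .
qed

lemma pol_eq:
  assumes L: "traj_lottery I T \<pi>1 = traj_lottery I T \<pi>2"
    and hs: "(h, s) \<in> set_pmf (traj_lottery_k I T \<pi>1 k)"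
  shows "\<pi>1 s = \<pi>2 s"
proof (rule pmf_eqI)
  fix a
  have Lk: "\<And>n. traj_lottery_k I T \<pi>1 n = traj_lottery_k I T \<pi>2 n"
    using L unfolding traj_lottery_def by metis
  have "pmf (traj_lottery_k I T \<pi>1 k) (h, s) * pmf (\<pi>1 s) a =
        pmf (traj_lottery_k I T \<pi>2 k) (h, s) * pmf (\<pi>2 s) a"
    using pmf_hist[of I T \<pi>1 k h s a] pmf_hist[of I T \<pi>2 k h s a] Lk by metis
  moreover have "pmf (traj_lottery_k I T \<pi>1 k) (h, s) > 0" using hs by (simp add: pmf_positive)
  ultimately show "pmf (\<pi>1 s) a = pmf (\<pi>2 s) a" using Lk by simp
qed

lemma J_eq:
  assumes L: "traj_lottery I T \<pi>1 = traj_lottery I T \<pi>2"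
  shows "J_RRL I T R \<alpha> F \<gamma> \<pi>1 = J_RRL I T R \<alpha> F \<gamma> \<pi>2"
proof -
  have Lk: "\<And>n. traj_lottery_k I T \<pi>1 n = traj_lottery_k I T \<pi>2 n"
    using L unfolding traj_lottery_def by metis
  have "\<And>n. measure_pmf.expectation (traj_lottery_k I T \<pi>1 n) (rrl_partial_return R \<alpha> F \<gamma> \<pi>1)
     = measure_pmf.expectation (traj_lottery_k I T \<pi>2 n) (rrl_partial_return R \<alpha> F \<gamma> \<pi>2)"
  proof -
    fix n
    have "measure_pmf.expectation (traj_lottery_k I T \<pi>1 n) (rrl_partial_return R \<alpha> F \<gamma> \<pi>1)
     = measure_pmf.expectation (traj_lottery_k I T \<pi>1 n) (rrl_partial_return R \<alpha> F \<gamma> \<pi>2)"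
    proof (rule integral_cong_AE)
      show "AE x in measure_pmf (traj_lottery_k I T \<pi>1 n).
          rrl_partial_return R \<alpha> F \<gamma> \<pi>1 x = rrl_partial_return R \<alpha> F \<gamma> \<pi>2 x"
      proof (rule AE_pmfI)
        fix x assume x: "x \<in> set_pmf (traj_lottery_k I T \<pi>1 n)"
        obtain h s' where xe: "x = (h, s')" by force
        have "\<And>t. t < length h \<Longrightarrow> \<pi>1 (fst (h ! t)) = \<pi>2 (fst (h ! t))"
        proof -
          fix t assume t: "t < length h"
          have "(take t h, fst (h!t)) \<in> set_pmf (traj_lottery_k I T \<pi>1 t)"
            using setA[of h s' I T \<pi>1 n] x xe t by auto
          then show "\<pi>1 (fst (h ! t)) = \<pi>2 (fst (h ! t))" using pol_eq[OF L] by blast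
        qed
        then show "rrl_partial_return R \<alpha> F \<gamma> \<pi>1 x = rrl_partial_return R \<alpha> F \<gamma> \<pi>2 x"
          unfolding rrl_partial_return_def xe Let_def by (intro sum.cong) auto
      qed
    qed auto
    then show "?thesis n" using Lk by simp
  qed
  then show ?thesis unfolding J_RRL_def by simp
qed

theorem mainTheorem7:
  fixes I :: "'s::finite pmf" and T :: "'s \<Rightarrow> 'a::finite \<Rightarrow> 's pmf"
  shows "Ord_RRL I T \<subseteq> Ord_FTLR I T
    \<and> (\<forall>(R :: 's \<Rightarrow> 'a \<Rightarrow> 's \<Rightarrow> real) \<alpha> (F :: 'a pmf \<Rightarrow> real) \<gamma> (\<pi>1 :: ('s, 'a) policy) \<pi>2.
         0 \<le> \<gamma> \<longrightarrow> \<gamma> < 1 \<longrightarrow> traj_lottery I T \<pi>1 = traj_lottery I T \<pi>2 \<longrightarrow>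
         J_RRL I T R \<alpha> F \<gamma> \<pi>1 = J_RRL I T R \<alpha> F \<gamma> \<pi>2)"
proof
  show "Ord_RRL I T \<subseteq> Ord_FTLR I T"
  proof
    fix ord assume "ord \<in> Ord_RRL I T"
    then obtain R \<alpha> F \<gamma> where o: "ord = induced_order (J_RRL I T R \<alpha> F \<gamma>)"
      unfolding Ord_RRL_def by blast
    define f where "f = (\<lambda>L. J_RRL I T R \<alpha> F \<gamma> (SOME \<pi>. traj_lottery I T \<pi> = L))"
    have "\<And>\<pi>. f (traj_lottery I T \<pi>) = J_RRL I T R \<alpha> F \<gamma> \<pi>"
    proof -
      fix \<pi>
      have "traj_lottery I T (SOME \<pi>'. traj_lottery I T \<pi>' = traj_lottery I T \<pi>) = traj_lottery I T \<pi>"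
        by (rule someI[where x=\<pi>]) (rule refl)
      then show "f (traj_lottery I T \<pi>) = J_RRL I T R \<alpha> F \<gamma> \<pi>"
        unfolding f_def by (rule J_eq)
    qed
    then have "ord = induced_order (\<lambda>\<pi>. f (traj_lottery I T \<pi>))" using o by simp
    then show "ord \<in> Ord_FTLR I T" unfolding Ord_FTLR_def by blast
  qed
next
  show "\<forall>(R :: 's \<Rightarrow> 'a \<Rightarrow> 's \<Rightarrow> real) \<alpha> (F :: 'a pmf \<Rightarrow> real) \<gamma> (\<pi>1 :: ('s, 'a) policy) \<pi>2.
         0 \<le> \<gamma> \<longrightarrow> \<gamma> < 1 \<longrightarrow> traj_lottery I T \<pi>1 = traj_lottery I T \<pi>2 \<longrightarrow>
         J_RRL I T R \<alpha> F \<gamma> \<pi>1 = J_RRL I T R \<alpha> F \<gamma> \<pi>2"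
    using J_eq by blast
qed

end
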